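(* Let $R$ be a commutative ring with $1$ and let $\alpha_0=1,\alpha_1,\alpha_2,\dots$ be a sequence in $R$. Define the infinite matrix $M=M(\alpha)$ with entries $M_{i,j}$, $i,j\in\mathbb N$, by $M_{0,0}=1$, $M_{0,j}=1$, $M_{i,0}=\alpha_i$, and $M_{i,j}=M_{i-1,j}+M_{i,j-1}$ for $i,j\geq1$. Define the unipotent lower-triangular infinite matrix $L=L(\alpha)$ by $L_{i,j}=M_{i-j,j}$ for $i\geq j\geq0$ and $L_{i,j}=0$ for $j>i$. Let $U$ be the infinite upper-triangular matrix with entries $U_{i,j}=\binom{j}{i}$. Then $M(\alpha)=L(\alpha)U$. *)

theory Defs
  imports Main
begin

fun Mmat :: "(nat \<Rightarrow> 'a::comm_ring_1) \<Rightarrow> nat \<Rightarrow> nat \<Rightarrow> 'a" where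
  "Mmat \<alpha> 0 j = 1"
| "Mmat \<alpha> (Suc i) 0 = \<alpha> (Suc i)"
| "Mmat \<alpha> (Suc i) (Suc j) = Mmat \<alpha> i (Suc j) + Mmat \<alpha> (Suc i) j"

definition Lmat :: "(nat \<Rightarrow> 'a::comm_ring_1) \<Rightarrow> nat \<Rightarrow> nat \<Rightarrow> 'a" where
  "Lmat \<alpha> i j = (if j \<le> i then Mmat \<alpha> (i - j) j else 0)"

definition Umat :: "nat \<Rightarrow> nat \<Rightarrow> 'a::comm_ring_1" where
  "Umat i j = of_nat (j choose i)"

text \<open>Product of infinite matrices: the entry (i,j) is the sum of the (finitely many,
  in the situation of interest) nonzero terms A i k * B k j.\<close>
definition inf_mat_mult :: "(nat \<Rightarrow> nat \<Rightarrow> 'a::comm_ring_1) \<Rightarrow> (nat \<Rightarrow> nat \<Rightarrow> 'a) \<Rightarrow> nat \<Rightarrow> nat \<Rightarrow> 'a" where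
  "inf_mat_mult A B i j = (\<Sum>k \<in> {k. A i k * B k j \<noteq> 0}. A i k * B k j)"

end

theory Submission
  imports Defs
begin

definition PP :: "(nat \<Rightarrow> 'a::comm_ring_1) \<Rightarrow> nat \<Rightarrow> nat \<Rightarrow> 'a" where
  "PP \<alpha> i j = (\<Sum>k\<le>i. Mmat \<alpha> (i-k) k * of_nat (j choose k))"
definition QQ :: "(nat \<Rightarrow> 'a::comm_ring_1) \<Rightarrow> nat \<Rightarrow> nat \<Rightarrow> 'a" where
  "QQ \<alpha> i j = (\<Sum>k\<le>i. Mmat \<alpha> (i-k) (Suc k) * of_nat (j choose k))"

lemma QA: "QQ \<alpha> (Suc i) j = PP \<alpha> (Suc i) j + QQ \<alpha> i j"
proof -
  have "QQ \<alpha> (Suc i) j = (\<Sum>k\<le>i. Mmat \<alpha> (Suc i-k) (Suc k) * of_nat (j choose k))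
      + of_nat (j choose Suc i)"
    unfolding QQ_def by simp
  also have "(\<Sum>k\<le>i. Mmat \<alpha> (Suc i-k) (Suc k) * of_nat (j choose k))
     = (\<Sum>k\<le>i. Mmat \<alpha> (i-k) (Suc k) * of_nat (j choose k)) +
       (\<Sum>k\<le>i. Mmat \<alpha> (Suc i-k) k * of_nat (j choose k))"
    by (simp add: sum.distrib[symmetric] Suc_diff_le algebra_simps)
  finally show ?thesis unfolding QQ_def PP_def by (simp add: algebra_simps)
qed

lemma PB: "PP \<alpha> (Suc i) (Suc j) = PP \<alpha> (Suc i) j + QQ \<alpha> i j"
proof -
  have "PP \<alpha> (Suc i) (Suc j) = Mmat \<alpha> (Suc i) 0 +
     (\<Sum>k\<le>i. Mmat \<alpha> (i-k) (Suc k) * (of_nat (j choose k) + of_nat (j choose Suc k)))"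
    unfolding PP_def by (simp add: sum.atMost_Suc_shift del: sum.atMost_Suc)
  also have "\<dots> = (Mmat \<alpha> (Suc i) 0 + (\<Sum>k\<le>i. Mmat \<alpha> (i-k) (Suc k) * of_nat (j choose Suc k)))
     + QQ \<alpha> i j"
    unfolding QQ_def by (simp add: sum.distrib algebra_simps)
  also have "Mmat \<alpha> (Suc i) 0 + (\<Sum>k\<le>i. Mmat \<alpha> (i-k) (Suc k) * of_nat (j choose Suc k)) = PP \<alpha> (Suc i) j"
    unfolding PP_def by (simp add: sum.atMost_Suc_shift del: sum.atMost_Suc)
  finally show ?thesis .
qed

lemma PD: "PP \<alpha> i (Suc j) = QQ \<alpha> i j"
proof (cases i)
  case 0 then show ?thesis by (simp add: PP_def QQ_def)
next
  case (Suc i') then show ?thesis by (simp add: PB QA add.commute)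
qed

lemma MP: "Mmat \<alpha> i j = PP \<alpha> i j"
proof (induction \<alpha> i j rule: Mmat.induct)
  case (1 \<alpha> j) then show ?case by (simp add: PP_def)
next
  case (2 \<alpha> i) then show ?case
    by (simp add: PP_def sum.atMost_Suc_shift del: sum.atMost_Suc)
next
  case (3 \<alpha> i j) then show ?case by (simp add: PD PB QA)
qed

theorem proposition4p6:
  fixes \<alpha> :: "nat \<Rightarrow> 'a::comm_ring_1"
  assumes "\<alpha> 0 = 1"
  shows "Mmat \<alpha> = inf_mat_mult (Lmat \<alpha>) Umat"
proof (intro ext)
  fix i j
  have sub: "{k. Lmat \<alpha> i k * Umat k j \<noteq> 0} \<subseteq> {..i}"
    by (auto simp: Lmat_def split: if_splits)
  have "inf_mat_mult (Lmat \<alpha>) Umat i j = (\<Sum>k\<le>i. Lmat \<alpha> i k * Umat k j)"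
    unfolding inf_mat_mult_def
    by (rule sum.mono_neutral_left) (use sub in auto)
  also have "\<dots> = PP \<alpha> i j"
    unfolding PP_def Lmat_def Umat_def by simp
  finally show "Mmat \<alpha> i j = inf_mat_mult (Lmat \<alpha>) Umat i j" by (simp add: MP)
qed

end
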